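(* Assume $\beta>0$, $\bar c>0$ and $0<\bar u<\bar c$, $\bar v\in\mathbb{R}$. Let $\Omega_1=(-\infty,0)\times\mathbb{R}$, $\Omega_2=(0,\infty)\times\mathbb{R}$, $\Gamma=\{x=0\}$, $\mathbf n_1=(1,0)$, $\mathbf n_2=(-1,0)$ the outward normals. Let $g$ be given and let $Q$ solve $\mathcal L\mathcal G Q=g$ in $\mathbb{R}^2$. Consider the following iteration. Choose initial values $Q^{1,0}$ on $\Omega_1$, $Q^{2,0}$ on $\Omega_2$ with $\mathcal G Q^{1,0}=\mathcal G Q^{2,0}$ on $\Gamma$; given $(Q^{1,k},Q^{2,k})$: (Correction step) with $\gamma^k=-\tfrac12\big[\mathcal A\nabla\mathcal G Q^{1,k}\cdot\mathbf n_1+\mathcal A\nabla\mathcal G Q^{2,k}\cdot\mathbf n_2\big]$ on $\Gamma$, solve $\mathcal L\mathcal G\tilde Q^{1,k}=0$ in $\Omega_1$, $(\mathcal A\nabla-\tfrac12\mathbf a)\mathcal G\tilde Q^{1,k}\cdot\mathbf n_1=\gamma^k$ on $\Gamma$; and $\mathcal L\mathcal G\tilde Q^{2,k}=0$ in $\Omega_2$, $(\mathcal A\nabla-\tfrac12\mathbf a)\mathcal G\tilde Q^{2,k}\cdot\mathbf n_2=\gamma^k$ and $\tilde Q^{2,k}=0$ on $\Gamma$. (Update step) with $\delta^k=\tfrac12\big[\mathcal G\tilde Q^{1,k}+\mathcal G\tilde Q^{2,k}\big]$ on $\Gamma$, solve $\mathcal L\mathcal G Q^{1,k+1}=g$ in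 $\Omega_1$, $\mathcal G Q^{1,k+1}=\mathcal G Q^{1,k}+\delta^k$ on $\Gamma$; and $\mathcal L\mathcal G Q^{2,k+1}=g$ in $\Omega_2$, $\mathcal G Q^{2,k+1}=\mathcal G Q^{2,k}+\delta^k$ and $Q^{2,k+1}=Q^{1,k}+\tilde Q^{1,k}$ on $\Gamma$. Then the algorithm converges in two iterations: $Q^{1,2}=Q|_{\Omega_1}$ and $Q^{2,2}=Q|_{\Omega_2}$.
   Context: $\mathcal G=\beta+\bar u\partial_x+\bar v\partial_y$ and $\mathcal L=\beta^2+2\bar u\bar v\partial_{xy}+2\beta(\bar u\partial_x+\bar v\partial_y)-(\bar c^2-\bar v^2)\partial_{yy}-(\bar c^2-\bar u^2)\partial_{xx}$, equivalently $\mathcal L=-\mathrm{div}(\mathcal A\nabla)+\mathbf a\cdot\nabla+\beta^2$ with $\mathcal A=\begin{pmatrix}\bar c^2-\bar u^2&-\bar u\bar v\\-\bar u\bar v&\bar c^2-\bar v^2\end{pmatrix}$ and $\mathbf a=2\beta(\bar u,\bar v)$. All problems (local and global) are understood in the Fourier sense in $y$: solutions are functions whose partial Fourier transform $\hat e(x,\xi)=\int_{\mathbb R}e(x,y)e^{-i\xi y}\,dy$ is, for each $\xi$, bounded in $x$ on the relevant domain (as $x\to-\infty$ in $\Omega_1$, as $x\to+\infty$ in $\Omega_2$). *)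

theory Defs
  imports "HOL-Analysis.Analysis"
begin

text \<open>Everything is formulated on the Fourier side in y: a function e(x,y) is represented
by its partial Fourier transform, a family  ehat :: real (xi) => real (x) => complex.
Then d/dy becomes multiplication by (i xi).  Functions on the closed half-lines
S1 = {..0} (closure of Omega_1) and S2 = {0..} (closure of Omega_2) are differentiated
within these sets, so that traces on Gamma = {x = 0} are one-sided values.\<close>

definition Dx :: "real set \<Rightarrow> (real \<Rightarrow> complex) \<Rightarrow> real \<Rightarrow> complex" where
  "Dx S f x = vector_derivative f (at x within S)"

definition smooth3 :: "real set \<Rightarrow> (real \<Rightarrow> complex) \<Rightarrow> bool" where
  "smooth3 S f \<longleftrightarrow> (\<forall>x\<in>S.
      (f has_vector_derivative Dx S f x) (at x within S) \<and>
      (Dx S f has_vector_derivative Dx S (Dx S f) x) (at x within S) \<and>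
      (Dx S (Dx S f) has_vector_derivative Dx S (Dx S (Dx S f)) x) (at x within S))"

text \<open>Fourier symbol of  G = beta + u d_x + v d_y.\<close>
definition Gh :: "real \<Rightarrow> real \<Rightarrow> real \<Rightarrow> real set \<Rightarrow> real \<Rightarrow> (real \<Rightarrow> complex) \<Rightarrow> real \<Rightarrow> complex" where
  "Gh \<beta> u v S \<xi> f x =
     of_real \<beta> * f x + of_real u * Dx S f x + of_real v * (\<i> * of_real \<xi>) * f x"

text \<open>Fourier symbol of
  L = beta^2 + 2 u v d_xy + 2 beta (u d_x + v d_y) - (c^2 - v^2) d_yy - (c^2 - u^2) d_xx.\<close>
definition Lh :: "real \<Rightarrow> real \<Rightarrow> real \<Rightarrow> real \<Rightarrow> real set \<Rightarrow> real \<Rightarrow> (real \<Rightarrow> complex) \<Rightarrow> real \<Rightarrow> complex" where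
  "Lh \<beta> c u v S \<xi> f x =
     of_real (\<beta>^2) * f x
     + of_real (2 * u * v) * (\<i> * of_real \<xi>) * Dx S f x
     + of_real (2 * \<beta>) * (of_real u * Dx S f x + of_real v * (\<i> * of_real \<xi>) * f x)
     - of_real (c^2 - v^2) * (\<i> * of_real \<xi>)^2 * f x
     - of_real (c^2 - u^2) * Dx S (Dx S f) x"

text \<open>Fourier side of  (A grad w) . n  with  A = [[c^2-u^2, -u v], [-u v, c^2-v^2]],
  grad = (d_x, i xi), n = (n_x, n_y).\<close>
definition conormal :: "real \<Rightarrow> real \<Rightarrow> real \<Rightarrow> real set \<Rightarrow> real \<Rightarrow> real \<times> real \<Rightarrow> (real \<Rightarrow> complex) \<Rightarrow> real \<Rightarrow> complex" where
  "conormal c u v S \<xi> n w x =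
     of_real (fst n) * (of_real (c^2 - u^2) * Dx S w x - of_real (u * v) * (\<i> * of_real \<xi>) * w x)
   + of_real (snd n) * (- of_real (u * v) * Dx S w x + of_real (c^2 - v^2) * (\<i> * of_real \<xi>) * w x)"

definition a_dot :: "real \<Rightarrow> real \<Rightarrow> real \<Rightarrow> real \<times> real \<Rightarrow> real" where
  "a_dot \<beta> u v n = 2 * \<beta> * (u * fst n + v * snd n)"

definition n1 :: "real \<times> real" where "n1 = (1, 0)"
definition n2 :: "real \<times> real" where "n2 = (-1, 0)"

end

theory Submission
  imports Defs
begin


lemma nb1: "x \<le> (0::real) \<Longrightarrow> at x within {..0} \<noteq> bot"
proof -
  assume "x \<le> 0"
  have "x islimpt {x-1..x}" by simp
  then have "x islimpt {..0}" by (rule islimpt_subset) (use \<open>x \<le> 0\<close> in auto)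
  then show ?thesis by (simp add: trivial_limit_within)
qed
lemma nb2: "x \<ge> (0::real) \<Longrightarrow> at x within {0..} \<noteq> bot"
proof -
  assume "x \<ge> 0"
  have "x islimpt {x..x+1}" by simp
  then have "x islimpt {0..}" by (rule islimpt_subset) (use \<open>x \<ge> 0\<close> in auto)
  then show ?thesis by (simp add: trivial_limit_within)
qed

lemma exp_deriv: "((\<lambda>x::real. exp ((\<mu>::complex) * of_real x)) has_vector_derivative \<mu> * exp (\<mu> * of_real x)) (at x within S)"
proof -
  have "((\<lambda>z. exp (\<mu> * z)) has_field_derivative \<mu> * exp (\<mu> * of_real x)) (at (of_real x))"
    by (auto intro!: derivative_eq_intros)
  from has_vector_derivative_real_field[OF this] show ?thesis by simp
qed

lemma FO:
  fixes y y' :: "real \<Rightarrow> complex"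
  assumes "convex S" "0 \<in> S"
    and d: "\<And>x. x \<in> S \<Longrightarrow> (y has_vector_derivative y' x) (at x within S)"
    and e: "\<And>x. x \<in> S \<Longrightarrow> x \<noteq> 0 \<Longrightarrow> y' x = \<mu> * y x"
    and "x \<in> S"
  shows "y x = y 0 * exp (\<mu> * of_real x)"
proof -
  let ?phi = "\<lambda>x. y x * exp (- \<mu> * of_real x)"
  have cont: "continuous_on S ?phi"
    unfolding continuous_on_eq_continuous_within
  proof
    fix x assume "x \<in> S"
    have "continuous (at x within S) y" using d[OF \<open>x\<in>S\<close>] by (rule has_vector_derivative_continuous)
    moreover have "continuous (at x within S) (\<lambda>x. exp (- \<mu> * of_real x))"
      by (intro continuous_intros)
    ultimately show "continuous (at x within S) ?phi" by (intro continuous_intros)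
  qed
  have der: "(?phi has_derivative (\<lambda>h. 0)) (at x within S)" if "x \<in> S - {0}" for x
  proof -
    have "(?phi has_vector_derivative (y' x * exp (- \<mu> * of_real x) + y x * (- \<mu> * exp (- \<mu> * of_real x)))) (at x within S)"
      using has_vector_derivative_mult[OF d exp_deriv[of "-\<mu>" x S]] that by auto
    moreover have "y' x * exp (- \<mu> * of_real x) + y x * (- \<mu> * exp (- \<mu> * of_real x)) = 0"
      using e[of x] that by (simp add: algebra_simps)
    ultimately show ?thesis by (simp add: has_vector_derivative_def)
  qed
  have "?phi x = ?phi 0"
    by (rule has_derivative_zero_unique_strong_convex[OF assms(1) _ cont assms(2) refl der assms(5), of "{0}"]) auto
  then have "y x * exp (- \<mu> * of_real x) * exp (\<mu> * of_real x) = y 0 * exp (\<mu> * of_real x)" by simp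
  then show ?thesis by (simp add: exp_minus field_simps)
qed

lemma norm_exp_ax: "norm (exp (a * complex_of_real x)) = exp (Re a * x)"
  by (simp add: norm_exp_eq_Re)

lemma B1:
  assumes b: "\<forall>x\<le>0. norm (K * exp (a * of_real x)) \<le> M" and a: "Re a < 0"
  shows "K = 0"
proof (rule ccontr)
  assume K: "K \<noteq> 0"
  have M: "M > 0" using b[rule_format, of 0] K by (smt (verit) norm_ge_zero zero_less_norm_iff exp_zero mult_1_right mult_zero_right of_real_0)
  define x where "x = (\<bar>ln (M / norm K)\<bar> + 1) / Re a"
  have x0: "x \<le> 0" unfolding x_def using a by (simp add: divide_nonneg_neg)
  have rx: "Re a * x = \<bar>ln (M / norm K)\<bar> + 1" unfolding x_def using a by simp
  have "M / norm K < exp (Re a * x)"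
  proof -
    have "M / norm K = exp (ln (M / norm K))" using M K by simp
    also have "\<dots> < exp (Re a * x)" unfolding rx by simp
    finally show ?thesis .
  qed
  then have "M < norm K * exp (Re a * x)" using K by (simp add: field_simps)
  moreover have "norm K * exp (Re a * x) \<le> M" using b[rule_format, OF x0] by (simp add: norm_mult norm_exp_ax)
  ultimately show False by simp
qed

lemma exp_ne:
  fixes a b :: complex
  assumes "a \<noteq> b"
  shows "exp (- a * of_real (pi / cmod (a - b))) \<noteq> exp (- b * of_real (pi / cmod (a - b)))"
proof
  let ?h = "pi / cmod (a - b)"
  assume eq: "exp (- a * of_real ?h) = exp (- b * of_real ?h)"
  have ee: "\<And>t. exp ((a - b) * t) = exp (a * t) * exp (- b * t)"
    by (simp add: exp_add[symmetric] algebra_simps)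
  have "exp ((a - b) * of_real ?h) = exp (a * of_real ?h) * exp (- b * of_real ?h)"
    by (rule ee)
  also have "\<dots> = exp (a * of_real ?h) * exp (- a * of_real ?h)" using eq by simp
  also have "\<dots> = 1" by (simp add: exp_minus)
  finally have "exp ((a - b) * of_real ?h) = 1" .
  then obtain n :: int where re: "Re ((a - b) * of_real ?h) = 0" and im: "Im ((a - b) * of_real ?h) = of_int (2 * n) * pi"
    using exp_eq_1 by blast
  have nz: "cmod (a - b) > 0" using assms by simp
  define z where "z = (a - b) * of_real ?h"
  have c1: "cmod z = pi" using nz unfolding z_def by (simp add: norm_mult norm_divide)
  have c2: "cmod z = \<bar>Im z\<bar>" unfolding z_def by (rule cmod_eq_Im[OF re])
  have "pi = \<bar>of_int (2 * n) * pi\<bar>" using c1 c2 im[folded z_def] by (simp only:)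
  moreover have "\<bar>of_int (2*n) * pi\<bar> = real_of_int (2*\<bar>n\<bar>) * pi" by (simp add: abs_mult)
  ultimately have "real_of_int (2*\<bar>n\<bar>) * pi = real_of_int 1 * pi" by simp
  then have "real_of_int (2 * \<bar>n\<bar>) = real_of_int 1" by (rule mult_right_cancel[OF pi_neq_zero, THEN iffD1])
  then have "2 * \<bar>n\<bar> = 1" by (rule of_int_eq_iff[THEN iffD1])
  then show False by presburger
qed

lemma B2:
  fixes A B a b :: complex
  assumes bd: "\<forall>x\<le>0. norm (A * exp (a * of_real x) + B * exp (b * of_real x)) \<le> M"
    and a: "Re a < 0" and b: "Re b < 0" and ab: "a \<noteq> b"
  shows "A = 0 \<and> B = 0"
proof -
  define h where "h = pi / cmod (a - b)"
  have h0: "h \<ge> 0" unfolding h_def by simp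
  let ?f = "\<lambda>x. A * exp (a * of_real x) + B * exp (b * of_real x)"
  have "\<forall>x\<le>0. norm ((A * (exp (- a * of_real h) - exp (- b * of_real h))) * exp (a * of_real x)) \<le> M + norm (exp (- b * of_real h)) * M"
  proof (intro allI impI)
    fix x :: real assume x: "x \<le> 0"
    have "(A * (exp (- a * of_real h) - exp (- b * of_real h))) * exp (a * of_real x) = ?f (x - h) - exp (- b * of_real h) * ?f x"
      by (simp add: algebra_simps exp_add[symmetric] exp_diff)
    also have "norm \<dots> \<le> norm (?f (x - h)) + norm (exp (- b * of_real h) * ?f x)" by (rule norm_triangle_ineq4)
    also have "\<dots> \<le> M + norm (exp (- b * of_real h)) * M"
      using bd[rule_format, of "x - h"] bd[rule_format, of x] x h0
      by (auto simp: norm_mult intro!: add_mono mult_left_mono)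
    finally show "norm ((A * (exp (- a * of_real h) - exp (- b * of_real h))) * exp (a * of_real x)) \<le> M + norm (exp (- b * of_real h)) * M" .
  qed
  from B1[OF this a] have "A * (exp (- a * of_real h) - exp (- b * of_real h)) = 0" .
  with exp_ne[OF ab] have A: "A = 0" unfolding h_def by simp
  have "\<forall>x\<le>0. norm (B * exp (b * of_real x)) \<le> M" using bd A by simp
  from B1[OF this b] A show ?thesis by simp
qed

lemma B3:
  fixes H Z a :: complex
  assumes bd: "\<forall>x\<le>0. norm ((H + Z * of_real x) * exp (a * of_real x)) \<le> M"
    and a: "Re a < 0"
  shows "H = 0 \<and> Z = 0"
proof -
  let ?f = "\<lambda>x. (H + Z * of_real x) * exp (a * of_real x)"
  have "\<forall>x\<le>0. norm ((- Z * exp (- a)) * exp (a * of_real x)) \<le> M + norm (exp (- a)) * M"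
  proof (intro allI impI)
    fix x :: real assume x: "x \<le> 0"
    have "(- Z * exp (- a)) * exp (a * of_real x) = ?f (x - 1) - exp (- a) * ?f x"
      by (simp add: exp_diff exp_minus field_simps)
    also have "norm \<dots> \<le> norm (?f (x - 1)) + norm (exp (- a) * ?f x)" by (rule norm_triangle_ineq4)
    also have "\<dots> \<le> M + norm (exp (- a)) * M"
      using bd[rule_format, of "x - 1"] bd[rule_format, of x] x
      by (auto simp: norm_mult intro!: add_mono mult_left_mono)
    finally show "norm ((- Z * exp (- a)) * exp (a * of_real x)) \<le> M + norm (exp (- a)) * M" .
  qed
  from B1[OF this a] have Z: "Z = 0" by simp
  have "\<forall>x\<le>0. norm (H * exp (a * of_real x)) \<le> M" using bd Z by simp
  from B1[OF this a] Z show ?thesis by simp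
qed

definition jet2 :: "real set \<Rightarrow> (real \<Rightarrow> complex) \<Rightarrow> (real \<Rightarrow> complex) \<Rightarrow> (real \<Rightarrow> complex) \<Rightarrow> bool" where
  "jet2 S h h1 h2 \<longleftrightarrow> (\<forall>x\<in>S. (h has_vector_derivative h1 x) (at x within S) \<and> (h1 has_vector_derivative h2 x) (at x within S))"

lemma bounded_normD: "bounded (f ` S) \<Longrightarrow> \<exists>M. \<forall>x\<in>S. norm (f x) \<le> M"
  by (auto simp: bounded_iff)

lemma div_split: "((P::complex) * E - Q * F) / d = (P / d) * E - (Q / d) * F"
  by (simp add: diff_divide_distrib)

lemma second_order_forms:
  fixes a b :: complex
  assumes S: "convex S" "0 \<in> S" and j: "jet2 S h h1 h2"
    and ode: "\<And>x. x \<in> S \<Longrightarrow> h2 x - (a + b) * h1 x + a * b * h x = 0"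
  shows "a \<noteq> b \<Longrightarrow> \<forall>x\<in>S. h x = ((h1 0 - b * h 0) / (a - b)) * exp (a * of_real x) - ((h1 0 - a * h 0) / (a - b)) * exp (b * of_real x)"
    and "a = b \<Longrightarrow> \<forall>x\<in>S. h x = (h 0 + (h1 0 - a * h 0) * of_real x) * exp (a * of_real x)"
proof -
  have z: "h1 x - q * h x = (h1 0 - q * h 0) * exp (p * of_real x)"
    if "x \<in> S" "p + q = a + b" "p * q = a * b" for x p q
  proof (rule FO[OF S, where y' = "\<lambda>x. h2 x - q * h1 x"])
    fix x assume x: "x \<in> S"
    show "((\<lambda>x. h1 x - q * h x) has_vector_derivative h2 x - q * h1 x) (at x within S)"
      using j x unfolding jet2_def by (auto intro!: has_vector_derivative_diff has_vector_derivative_mult_right)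
    show "h2 x - q * h1 x = p * (h1 x - q * h x)"
    proof -
      have "h2 x - q * h1 x - p * (h1 x - q * h x) = h2 x - (p + q) * h1 x + (p * q) * h x"
        by (simp add: algebra_simps)
      also have "\<dots> = 0" using ode[OF x] that(2,3) by simp
      finally show ?thesis by simp
    qed
  qed (use that in auto)
  show "a \<noteq> b \<Longrightarrow> \<forall>x\<in>S. h x = ((h1 0 - b * h 0) / (a - b)) * exp (a * of_real x) - ((h1 0 - a * h 0) / (a - b)) * exp (b * of_real x)"
  proof (intro ballI)
    fix x assume ab: "a \<noteq> b" and x: "x \<in> S"
    have e1: "h1 x - b * h x = (h1 0 - b * h 0) * exp (a * of_real x)" using z[OF x, of a b] by simp
    have e2: "h1 x - a * h x = (h1 0 - a * h 0) * exp (b * of_real x)" using z[OF x, of b a] by (simp add: algebra_simps)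
    have "(a - b) * h x = (h1 x - b * h x) - (h1 x - a * h x)" by (simp add: algebra_simps)
    also have "\<dots> = (h1 0 - b * h 0) * exp (a * of_real x) - (h1 0 - a * h 0) * exp (b * of_real x)" using e1 e2 by simp
    finally have eq: "(a - b) * h x = (h1 0 - b * h 0) * exp (a * of_real x) - (h1 0 - a * h 0) * exp (b * of_real x)" .
    have "h x = ((a - b) * h x) / (a - b)" using ab by simp
    also have "\<dots> = ((h1 0 - b * h 0) * exp (a * of_real x) - (h1 0 - a * h 0) * exp (b * of_real x)) / (a - b)"
      by (simp only: eq)
    also have "\<dots> = ((h1 0 - b * h 0) / (a - b)) * exp (a * of_real x) - ((h1 0 - a * h 0) / (a - b)) * exp (b * of_real x)"
      by (rule div_split)
    finally show "h x = ((h1 0 - b * h 0) / (a - b)) * exp (a * of_real x) - ((h1 0 - a * h 0) / (a - b)) * exp (b * of_real x)" .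
  qed
  show "a = b \<Longrightarrow> \<forall>x\<in>S. h x = (h 0 + (h1 0 - a * h 0) * of_real x) * exp (a * of_real x)"
  proof (intro ballI)
    fix x assume ab: "a = b" and x: "x \<in> S"
    define C where "C = h1 0 - a * h 0"
    have e1: "h1 y - a * h y = C * exp (a * of_real y)" if "y \<in> S" for y
      using z[OF that, of a a] ab unfolding C_def by simp
    let ?phi = "\<lambda>y. h y * exp (- a * of_real y) - C * of_real y"
    have "?phi x = ?phi 0 * exp (0 * of_real x)"
    proof (rule FO[OF S, where y' = "\<lambda>y. 0"])
      fix y assume y: "y \<in> S"
      have d1: "((\<lambda>y. C * complex_of_real y) has_vector_derivative C) (at y within S)"
      proof -
        have "((\<lambda>z. C * z) has_field_derivative C) (at (of_real y))" by (auto intro!: derivative_eq_intros)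
        from has_vector_derivative_real_field[OF this] show ?thesis .
      qed
      have "(?phi has_vector_derivative (h y * (- a * exp (- a * of_real y)) + h1 y * exp (- a * of_real y) - C)) (at y within S)"
      proof -
        have dh: "(h has_vector_derivative h1 y) (at y within S)" using j y unfolding jet2_def by auto
        show ?thesis by (rule has_vector_derivative_diff[OF has_vector_derivative_mult[OF dh exp_deriv[of "-a" y S]] d1])
      qed
      moreover have "h y * (- a * exp (- a * of_real y)) + h1 y * exp (- a * of_real y) - C = 0"
      proof -
        have "h y * (- a * exp (- a * of_real y)) + h1 y * exp (- a * of_real y) = (h1 y - a * h y) * exp (- a * of_real y)"
          by (simp add: algebra_simps)
        also have "\<dots> = C" using e1[OF y] by (simp add: exp_minus)
        finally show ?thesis by simp
      qed
      ultimately show "(?phi has_vector_derivative 0) (at y within S)" by simp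
    qed (use x in auto)
    then have "h x * exp (- a * of_real x) = h 0 + C * of_real x" by (simp add: algebra_simps)
    then have "h x * exp (- a * of_real x) * exp (a * of_real x) = (h 0 + C * of_real x) * exp (a * of_real x)" by simp
    moreover have "exp (- a * of_real x) * exp (a * of_real x) = 1" by (simp add: exp_minus)
    ultimately show "h x = (h 0 + (h1 0 - a * h 0) * of_real x) * exp (a * of_real x)"
      unfolding C_def by (metis mult.assoc mult_1_right)
  qed
qed

lemma Z1:
  fixes a b :: complex
  assumes j: "jet2 {..0} h h1 h2"
    and ode: "\<And>x. x \<le> 0 \<Longrightarrow> h2 x - (a + b) * h1 x + a * b * h x = 0"
    and a: "Re a < 0" and b: "Re b < 0" and bd: "bounded (h ` {..0})"
    and x: "x \<le> 0"
  shows "h x = 0"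
proof -
  obtain M where M: "\<forall>x\<in>{..0}. norm (h x) \<le> M" using bounded_normD[OF bd] by blast
  have S: "convex {..(0::real)}" "(0::real) \<in> {..0}" by auto
  have ode': "\<And>x. x \<in> {..0} \<Longrightarrow> h2 x - (a + b) * h1 x + a * b * h x = 0" using ode by auto
  show ?thesis
  proof (cases "a = b")
    case True
    define H where "H = h 0"
    define Z where "Z = h1 0 - a * h 0"
    have f: "\<forall>x\<in>{..0}. h x = (H + Z * of_real x) * exp (a * of_real x)"
      using second_order_forms(2)[OF S j ode' True] unfolding H_def Z_def .
    have "\<forall>x\<le>0. norm ((H + Z * of_real x) * exp (a * of_real x)) \<le> M"
    proof (intro allI impI)
      fix y :: real assume y: "y \<le> 0"
      have "h y = (H + Z * of_real y) * exp (a * of_real y)" using f y by blast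
      moreover have "norm (h y) \<le> M" using M y by blast
      ultimately show "norm ((H + Z * of_real y) * exp (a * of_real y)) \<le> M" by simp
    qed
    from B3[OF this a] have "H = 0" "Z = 0" by auto
    moreover have "h x = (H + Z * of_real x) * exp (a * of_real x)" using f x by blast
    ultimately show ?thesis by simp
  next
    case False
    define A where "A = (h1 0 - b * h 0) / (a - b)"
    define B where "B = (h1 0 - a * h 0) / (a - b)"
    have f: "\<forall>x\<in>{..0}. h x = A * exp (a * of_real x) - B * exp (b * of_real x)"
      using second_order_forms(1)[OF S j ode' False] unfolding A_def B_def .
    have "\<forall>x\<le>0. norm (A * exp (a * of_real x) + (- B) * exp (b * of_real x)) \<le> M"
    proof (intro allI impI)
      fix y :: real assume y: "y \<le> 0"
      have "h y = A * exp (a * of_real y) - B * exp (b * of_real y)" using f y by blast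
      moreover have "norm (h y) \<le> M" using M y by blast
      ultimately show "norm (A * exp (a * of_real y) + (- B) * exp (b * of_real y)) \<le> M" by simp
    qed
    from B2[OF this a b False] have "A = 0" "B = 0" by auto
    moreover have "h x = A * exp (a * of_real x) - B * exp (b * of_real x)" using f x by blast
    ultimately show ?thesis by simp
  qed
qed

lemma xexp_bound:
  fixes r x :: real
  assumes "r < 0" "x \<ge> 0"
  shows "x * exp (r * x) \<le> 1 / (- r)"
proof -
  have "1 + (- r * x) \<le> exp (- r * x)" by (rule exp_ge_add_one_self)
  then have "(- r * x) * exp (r * x) \<le> exp (- r * x) * exp (r * x)"
    by (intro mult_right_mono) auto
  also have "\<dots> = 1" by (simp add: exp_minus[symmetric] exp_add[symmetric])
  finally have "(- r) * (x * exp (r * x)) \<le> 1" by (simp add: algebra_simps)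
  then show ?thesis using assms by (simp add: field_simps)
qed

lemma Z2:
  fixes a b :: complex
  assumes j: "jet2 {0..} h h1 h2"
    and ode: "\<And>x. x \<ge> 0 \<Longrightarrow> h2 x - (a + b) * h1 x + a * b * h x = 0"
    and a: "Re a < 0" and b: "Re b < 0"
  shows "bounded (h ` {0..})"
proof -
  have S: "convex {(0::real)..}" "(0::real) \<in> {0..}" by auto
  have ea: "norm (exp (c * of_real x)) \<le> 1" if "Re c < 0" "x \<ge> 0" for c :: complex and x :: real
    using that by (simp add: norm_exp_ax mult_nonpos_nonneg)
  show ?thesis unfolding bounded_iff
  proof (cases "a = b")
    case True
    have ode': "\<And>x. x \<in> {0..} \<Longrightarrow> h2 x - (a + b) * h1 x + a * b * h x = 0" using ode by auto
    define H where "H = h 0"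
    define Z where "Z = h1 0 - a * h 0"
    have f: "\<forall>x\<in>{0..}. h x = (H + Z * of_real x) * exp (a * of_real x)"
      using second_order_forms(2)[OF S j ode' True] unfolding H_def Z_def .
    let ?H = H and ?Z = Z
    have "norm (h x) \<le> norm ?H + norm ?Z * (1 / (- Re a))" if "x \<ge> 0" for x
    proof -
      have "h x = (?H + ?Z * of_real x) * exp (a * of_real x)" using f that by blast
      then have "norm (h x) \<le> (norm ?H + norm ?Z * x) * exp (Re a * x)"
        using that by (simp add: norm_mult norm_exp_ax mult_right_mono norm_triangle_le)
      also have "\<dots> = norm ?H * exp (Re a * x) + norm ?Z * (x * exp (Re a * x))" by (simp add: algebra_simps)
      also have "\<dots> \<le> norm ?H * 1 + norm ?Z * (1 / (- Re a))"
        using that a xexp_bound[OF a that] by (intro add_mono mult_left_mono) (auto simp: mult_nonpos_nonneg)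
      finally show ?thesis by simp
    qed
    then show "\<exists>M. \<forall>y\<in>h ` {0..}. norm y \<le> M" by auto
  next
    case False
    have ode': "\<And>x. x \<in> {0..} \<Longrightarrow> h2 x - (a + b) * h1 x + a * b * h x = 0" using ode by auto
    define A where "A = (h1 0 - b * h 0) / (a - b)"
    define B where "B = (h1 0 - a * h 0) / (a - b)"
    have f: "\<forall>x\<in>{0..}. h x = A * exp (a * of_real x) - B * exp (b * of_real x)"
      using second_order_forms(1)[OF S j ode' False] unfolding A_def B_def .
    let ?A = A and ?B = B
    have "norm (h x) \<le> norm ?A + norm ?B" if "x \<ge> 0" for x
    proof -
      have "h x = ?A * exp (a * of_real x) - ?B * exp (b * of_real x)" using f that by blast
      then have "norm (h x) \<le> norm ?A * norm (exp (a * of_real x)) + norm ?B * norm (exp (b * of_real x))"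
        using norm_triangle_ineq4[of "?A * exp (a * of_real x)" "?B * exp (b * of_real x)"] by (simp add: norm_mult)
      also have "\<dots> \<le> norm ?A * 1 + norm ?B * 1"
        using ea[OF a that] ea[OF b that] by (intro add_mono mult_left_mono) auto
      finally show ?thesis by simp
    qed
    then show "\<exists>M. \<forall>y\<in>h ` {0..}. norm y \<le> M" by auto
  qed
qed

definition jet3 :: "real set \<Rightarrow> (real \<Rightarrow> complex) \<Rightarrow> (real \<Rightarrow> complex) \<Rightarrow> (real \<Rightarrow> complex) \<Rightarrow> (real \<Rightarrow> complex) \<Rightarrow> bool" where
  "jet3 S f f1 f2 f3 \<longleftrightarrow> (\<forall>x\<in>S. (f has_vector_derivative f1 x) (at x within S) \<and>
     (f1 has_vector_derivative f2 x) (at x within S) \<and> (f2 has_vector_derivative f3 x) (at x within S))"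

lemma zero_deriv:
  assumes nb: "at x within S \<noteq> bot" and x: "x \<in> S" and d: "(h has_vector_derivative d) (at x within S)"
    and z: "\<forall>y\<in>S. h y = 0"
  shows "d = 0"
proof -
  have "((\<lambda>_. 0) has_vector_derivative d) (at x within S)"
    by (rule has_vector_derivative_transform_within[OF d zero_less_one x]) (use z in auto)
  moreover have "((\<lambda>_. 0) has_vector_derivative 0) (at x within S)" by (rule has_vector_derivative_const)
  ultimately show ?thesis by (rule vector_derivative_unique_within[OF nb])
qed

lemma cexp_deriv: "((\<lambda>x::real. K * exp ((\<mu>::complex) * of_real x)) has_vector_derivative K * \<mu> * exp (\<mu> * of_real x)) (at x within S)"
  using has_vector_derivative_mult_right[OF exp_deriv[of \<mu> x S], of K] by (simp add: mult.assoc)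

lemma reduce_third:
  fixes lp lm l0 :: complex
  assumes S: "convex S" "0 \<in> S" and j: "jet3 S f f1 f2 f3"
    and ode: "\<And>x. x \<in> S \<Longrightarrow> x \<noteq> 0 \<Longrightarrow> f3 x - (lp + lm + l0) * f2 x + (lp * lm + lp * l0 + lm * l0) * f1 x - lp * lm * l0 * f x = 0"
    and d: "(lp - lm) * (lp - l0) \<noteq> 0"
  defines "K \<equiv> (f2 0 - (lm + l0) * f1 0 + lm * l0 * f 0) / ((lp - lm) * (lp - l0))"
  shows "jet2 S (\<lambda>x. f x - K * exp (lp * of_real x)) (\<lambda>x. f1 x - K * lp * exp (lp * of_real x)) (\<lambda>x. f2 x - K * lp * lp * exp (lp * of_real x))"
    and "\<And>x. x \<in> S \<Longrightarrow> (f2 x - K * lp * lp * exp (lp * of_real x)) - (lm + l0) * (f1 x - K * lp * exp (lp * of_real x)) + lm * l0 * (f x - K * exp (lp * of_real x)) = 0"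
proof -
  show "jet2 S (\<lambda>x. f x - K * exp (lp * of_real x)) (\<lambda>x. f1 x - K * lp * exp (lp * of_real x)) (\<lambda>x. f2 x - K * lp * lp * exp (lp * of_real x))"
    unfolding jet2_def
  proof
    fix x assume x: "x \<in> S"
    show "((\<lambda>x. f x - K * exp (lp * of_real x)) has_vector_derivative f1 x - K * lp * exp (lp * of_real x)) (at x within S) \<and>
      ((\<lambda>x. f1 x - K * lp * exp (lp * of_real x)) has_vector_derivative f2 x - K * lp * lp * exp (lp * of_real x)) (at x within S)"
      using j x unfolding jet3_def
      by (auto intro!: has_vector_derivative_diff cexp_deriv)
  qed
  let ?y = "\<lambda>x. f2 x - (lm + l0) * f1 x + lm * l0 * f x"
  have y: "?y x = ?y 0 * exp (lp * of_real x)" if x: "x \<in> S" for x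
  proof (rule FO[OF S, where y' = "\<lambda>x. f3 x - (lm + l0) * f2 x + lm * l0 * f1 x"])
    fix x assume x: "x \<in> S"
    show "(?y has_vector_derivative f3 x - (lm + l0) * f2 x + lm * l0 * f1 x) (at x within S)"
      using j x unfolding jet3_def
      by (auto intro!: has_vector_derivative_diff has_vector_derivative_add has_vector_derivative_mult_right)
    assume "x \<noteq> 0"
    from ode[OF x this] show "f3 x - (lm + l0) * f2 x + lm * l0 * f1 x = lp * ?y x"
      by (simp add: algebra_simps)
  qed (use x in auto)
  fix x assume x: "x \<in> S"
  have "(f2 x - K * lp * lp * exp (lp * of_real x)) - (lm + l0) * (f1 x - K * lp * exp (lp * of_real x)) + lm * l0 * (f x - K * exp (lp * of_real x))
      = ?y x - K * ((lp - lm) * (lp - l0)) * exp (lp * of_real x)" by (simp add: algebra_simps)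
  also have "\<dots> = 0" using y[OF x] d unfolding K_def by simp
  finally show "(f2 x - K * lp * lp * exp (lp * of_real x)) - (lm + l0) * (f1 x - K * lp * exp (lp * of_real x)) + lm * l0 * (f x - K * exp (lp * of_real x)) = 0" .
qed

lemma F1:
  fixes lp lm l0 :: complex
  assumes j: "jet3 {..0} f f1 f2 f3" and bd: "bounded (f ` {..0})"
    and ode: "\<And>x. x < 0 \<Longrightarrow> f3 x - (lp + lm + l0) * f2 x + (lp * lm + lp * l0 + lm * l0) * f1 x - lp * lm * l0 * f x = 0"
    and rp: "Re lp > 0" and rm: "Re lm < 0" and r0: "Re l0 < 0"
  shows "\<forall>x\<le>0. f x = f 0 * exp (lp * of_real x)" and "f1 0 = lp * f 0" and "f2 0 = lp * lp * f 0"
proof -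
  have S: "convex {..(0::real)}" "(0::real) \<in> {..0}" by auto
  have d: "(lp - lm) * (lp - l0) \<noteq> 0" using rp rm r0 by auto
  define K where "K \<equiv> (f2 0 - (lm + l0) * f1 0 + lm * l0 * f 0) / ((lp - lm) * (lp - l0))"
  have ode': "\<And>x. x \<in> {..0} \<Longrightarrow> x \<noteq> 0 \<Longrightarrow> f3 x - (lp + lm + l0) * f2 x + (lp * lm + lp * l0 + lm * l0) * f1 x - lp * lm * l0 * f x = 0"
    using ode by auto
  note R = reduce_third[OF S j ode' d, folded K_def]
  let ?h = "\<lambda>x. f x - K * exp (lp * of_real x)"
  let ?h1 = "\<lambda>x. f1 x - K * lp * exp (lp * of_real x)"
  let ?h2 = "\<lambda>x. f2 x - K * lp * lp * exp (lp * of_real x)"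
  obtain M where M: "\<forall>x\<in>{..0}. norm (f x) \<le> M" using bounded_normD[OF bd] by blast
  have "bounded (?h ` {..0})" unfolding bounded_iff
  proof (intro exI ballI)
    fix z assume "z \<in> ?h ` {..0}"
    then obtain x where x: "x \<le> 0" and z: "z = ?h x" by auto
    have "norm z \<le> norm (f x) + norm (K * exp (lp * of_real x))" unfolding z by (rule norm_triangle_ineq4)
    also have "\<dots> \<le> M + norm K * 1"
    proof (intro add_mono)
      show "norm (f x) \<le> M" using M x by blast
      have "Re lp * x \<le> 0" using rp x by (simp add: mult_nonneg_nonpos)
      then show "norm (K * exp (lp * of_real x)) \<le> norm K * 1"
        by (simp add: norm_mult norm_exp_ax mult_left_le)
    qed
    finally show "norm z \<le> M + norm K * 1" .
  qed
  from Z1[OF R(1) R(2) rm r0 this] have h0: "\<And>x. x \<le> 0 \<Longrightarrow> ?h x = 0" by auto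
  have h1: "?h1 x = 0" if x: "x \<le> 0" for x
  proof (rule zero_deriv[OF nb1[OF x]])
    show "(?h has_vector_derivative ?h1 x) (at x within {..0})" using R(1) x unfolding jet2_def by auto
    show "\<forall>y\<in>{..0}. ?h y = 0" using h0 by auto
  qed (use x in auto)
  have h2: "?h2 0 = 0"
  proof (rule zero_deriv[OF nb1[of 0]])
    have "0 \<in> {..(0::real)}" by simp
    with R(1) show "(?h1 has_vector_derivative ?h2 0) (at 0 within {..0})" unfolding jet2_def by blast
    show "\<forall>y\<in>{..0}. ?h1 y = 0" using h1 by auto
  qed auto
  have fK: "f 0 = K" using h0[of 0] by simp
  show "\<forall>x\<le>0. f x = f 0 * exp (lp * of_real x)" using h0 fK by auto
  show "f1 0 = lp * f 0" using h1[of 0] fK by simp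
  show "f2 0 = lp * lp * f 0" using h2 fK by simp
qed

lemma F2:
  fixes lp lm l0 :: complex
  assumes j: "jet3 {0..} f f1 f2 f3" and bd: "bounded (f ` {0..})"
    and ode: "\<And>x. x > 0 \<Longrightarrow> f3 x - (lp + lm + l0) * f2 x + (lp * lm + lp * l0 + lm * l0) * f1 x - lp * lm * l0 * f x = 0"
    and rp: "Re lp > 0" and rm: "Re lm < 0" and r0: "Re l0 < 0"
  shows "\<forall>x\<ge>0. f2 x - (lm + l0) * f1 x + lm * l0 * f x = 0"
proof -
  have S: "convex {(0::real)..}" "(0::real) \<in> {0..}" by auto
  have d: "(lp - lm) * (lp - l0) \<noteq> 0" using rp rm r0 by auto
  define K where "K \<equiv> (f2 0 - (lm + l0) * f1 0 + lm * l0 * f 0) / ((lp - lm) * (lp - l0))"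
  have ode': "\<And>x. x \<in> {0..} \<Longrightarrow> x \<noteq> 0 \<Longrightarrow> f3 x - (lp + lm + l0) * f2 x + (lp * lm + lp * l0 + lm * l0) * f1 x - lp * lm * l0 * f x = 0"
    using ode by auto
  note R = reduce_third[OF S j ode' d, folded K_def]
  let ?h = "\<lambda>x. f x - K * exp (lp * of_real x)"
  have "bounded (?h ` {0..})" by (rule Z2[OF R(1) R(2) rm r0]) auto
  from bounded_normD[OF this] obtain M1 where M1: "\<forall>x\<in>{0..}. norm (?h x) \<le> M1" by blast
  obtain M where M: "\<forall>x\<in>{0..}. norm (f x) \<le> M" using bounded_normD[OF bd] by blast
  have "\<forall>x\<le>0. norm (K * exp ((- lp) * of_real x)) \<le> M + M1"
  proof (intro allI impI)
    fix x :: real assume "x \<le> 0"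
    then have x: "- x \<in> {0..}" by simp
    have "K * exp ((- lp) * of_real x) = f (- x) - ?h (- x)" by simp
    also have "norm \<dots> \<le> norm (f (-x)) + norm (?h (-x))" by (rule norm_triangle_ineq4)
    also have "\<dots> \<le> M + M1"
    proof (intro add_mono)
      show "norm (f (-x)) \<le> M" using M x by blast
      show "norm (?h (-x)) \<le> M1" using M1 x by blast
    qed
    finally show "norm (K * exp ((- lp) * of_real x)) \<le> M + M1" .
  qed
  from B1[OF this] rp have "K = 0" by simp
  then have Y: "f2 0 - (lm + l0) * f1 0 + lm * l0 * f 0 = 0" unfolding K_def using d by simp
  show ?thesis
  proof (intro allI impI)
    fix x :: real assume "x \<ge> 0"
    from R(2)[of x] this \<open>K = 0\<close> show "f2 x - (lm + l0) * f1 x + lm * l0 * f x = 0" by simp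
  qed
qed

lemma csqrt_re_gt:
  fixes \<beta> c u v \<xi> :: real
  assumes "\<beta> > 0" "c > 0" "0 < u" "u < c"
  defines "ab \<equiv> complex_of_real \<beta> + complex_of_real v * (\<i> * complex_of_real \<xi>)"
  defines "s \<equiv> csqrt (complex_of_real (c^2) * ab^2 + complex_of_real ((c^2 - u^2) * c^2 * \<xi>^2))"
  shows "Re s > u * \<beta>"
proof (rule ccontr)
  assume "\<not> Re s > u * \<beta>"
  then have pl: "Re s \<le> u * \<beta>" by simp
  define p where "p = Re s"
  define q where "q = Im s"
  have p0: "p \<ge> 0" unfolding p_def s_def using csqrt_principal[of "complex_of_real (c^2) * ab^2 + complex_of_real ((c^2 - u^2) * c^2 * \<xi>^2)"] by auto
  have sq: "s^2 = complex_of_real (c^2) * ab^2 + complex_of_real ((c^2 - u^2) * c^2 * \<xi>^2)" unfolding s_def by simp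
  define R where "R = c^2 * (\<beta>^2 - v^2 * \<xi>^2) + (c^2 - u^2) * c^2 * \<xi>^2"
  define T where "T = c^2 * \<beta> * v * \<xi>"
  have re: "p^2 - q^2 = R"
  proof -
    have "Re (s^2) = p^2 - q^2" unfolding p_def q_def by (simp add: power2_eq_square)
    moreover have "Re (s^2) = R" unfolding sq R_def ab_def by (simp add: power2_eq_square algebra_simps)
    ultimately show ?thesis by simp
  qed
  have im: "p * q = T"
  proof -
    have "Im (s^2) = 2 * p * q" unfolding p_def q_def by (simp add: power2_eq_square)
    moreover have "Im (s^2) = 2 * T" unfolding sq T_def ab_def by (simp add: power2_eq_square algebra_simps)
    ultimately show ?thesis by simp
  qed
  define P where "P = p^2"
  define B where "B = u^2 * \<beta>^2"
  have PB: "P \<le> B" unfolding P_def B_def using p0 pl power_mono[OF pl[folded p_def] p0, of 2] by (simp add: power_mult_distrib)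
  have PR: "0 \<le> P - R" using re unfolding P_def by (smt (verit) zero_le_power2)
  have q2: "q^2 = P - R" using re unfolding P_def by simp
  have "T^2 = p^2 * q^2" using im by (metis power_mult_distrib)
  then have "T^2 = P * (P - R)" using q2 unfolding P_def by simp
  also have "\<dots> \<le> B * (B - R)" using PB PR by (intro mult_mono) (auto simp: P_def B_def)
  finally have le: "T^2 \<le> B * (B - R)" .
  have "B * (B - R) - T^2 = - ((c^2 - u^2) * \<beta>^2 * (u^2 * \<beta>^2 + c^2 * v^2 * \<xi>^2 + u^2 * c^2 * \<xi>^2))"
    unfolding B_def R_def T_def by (simp add: power2_eq_square algebra_simps)
  moreover have "(c^2 - u^2) * \<beta>^2 * (u^2 * \<beta>^2 + c^2 * v^2 * \<xi>^2 + u^2 * c^2 * \<xi>^2) > 0"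
  proof -
    have "c^2 - u^2 > 0" using assms by (simp add: power_strict_mono)
    moreover have "u^2 * \<beta>^2 + c^2 * v^2 * \<xi>^2 + u^2 * c^2 * \<xi>^2 > 0"
      using assms by (intro add_pos_nonneg) auto
    ultimately show ?thesis using assms by simp
  qed
  ultimately show False using le by simp
qed

definition abx :: "real \<Rightarrow> real \<Rightarrow> real \<Rightarrow> complex" where
  "abx \<beta> v \<xi> = complex_of_real \<beta> + complex_of_real v * (\<i> * complex_of_real \<xi>)"

lemma roots:
  fixes \<beta> c u v \<xi> :: real
  assumes "\<beta> > 0" "c > 0" "0 < u" "u < c"
  obtains lp lm l0 where "Re lp > 0" "Re lm < 0" "Re l0 < 0" "abx \<beta> v \<xi> = - complex_of_real u * l0"
    "(lp + lm) * complex_of_real (c^2 - u^2) = 2 * complex_of_real u * abx \<beta> v \<xi>"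
    "lp * lm * complex_of_real (c^2 - u^2) = - (abx \<beta> v \<xi> ^ 2 + complex_of_real (c^2 * \<xi>^2))"
proof -
  define ab where "ab = abx \<beta> v \<xi>"
  define s where "s \<equiv> csqrt (complex_of_real (c^2) * ab^2 + complex_of_real ((c^2 - u^2) * c^2 * \<xi>^2))"
  have rs: "Re s > u * \<beta>" unfolding s_def ab_def abx_def by (rule csqrt_re_gt[OF assms])
  define d where "d = c^2 - u^2"
  have d: "d > 0" unfolding d_def using assms by (simp add: power_strict_mono)
  define lp where "lp = (complex_of_real u * ab + s) / complex_of_real d"
  define lm where "lm = (complex_of_real u * ab - s) / complex_of_real d"
  define l0 where "l0 = - ab / complex_of_real u"
  have reab: "Re ab = \<beta>" unfolding ab_def abx_def by simp
  show ?thesis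
  proof (rule that[of lp lm l0, folded ab_def])
    have ub: "u * \<beta> > 0" using assms by simp
    have "0 < u * \<beta> + Re s" using ub rs by linarith
    then show "Re lp > 0" unfolding lp_def using d reab by (simp add: Re_divide_of_real)
    show "Re lm < 0" unfolding lm_def using d rs assms reab by (simp add: Re_divide_of_real divide_neg_pos)
    show "Re l0 < 0" unfolding l0_def using assms reab by (simp add: Re_divide_of_real)
    show "ab = - complex_of_real u * l0" unfolding l0_def using assms by simp
    show "(lp + lm) * complex_of_real (c^2 - u^2) = 2 * complex_of_real u * ab"
      unfolding lp_def lm_def d_def[symmetric] using d by (simp add: field_simps)
    have sq: "s^2 = complex_of_real (c^2) * ab^2 + complex_of_real (d * c^2 * \<xi>^2)" unfolding s_def d_def by simp
    have "lp * lm * complex_of_real d = ((complex_of_real u * ab)^2 - s^2) / complex_of_real d"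
      unfolding lp_def lm_def using d by (simp add: field_simps power2_eq_square)
    also have "(complex_of_real u * ab)^2 - s^2 = - (complex_of_real d * (ab ^ 2 + complex_of_real (c^2 * \<xi>^2)))"
      unfolding sq d_def by (simp add: algebra_simps power2_eq_square)
    also have "- (complex_of_real d * (ab ^ 2 + complex_of_real (c^2 * \<xi>^2))) / complex_of_real d = - (ab ^ 2 + complex_of_real (c^2 * \<xi>^2))"
      using d by simp
    finally show "lp * lm * complex_of_real (c^2 - u^2) = - (ab ^ 2 + complex_of_real (c^2 * \<xi>^2))"
      unfolding d_def .
  qed
qed

definition LGx :: "real \<Rightarrow> real \<Rightarrow> real \<Rightarrow> real \<Rightarrow> real \<Rightarrow> complex \<Rightarrow> complex \<Rightarrow> complex \<Rightarrow> complex \<Rightarrow> complex" where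
  "LGx \<beta> c u v \<xi> f0 f1 f2 f3 =
     of_real (\<beta>^2) * (abx \<beta> v \<xi> * f0 + of_real u * f1)
     + of_real (2 * u * v) * (\<i> * of_real \<xi>) * (abx \<beta> v \<xi> * f1 + of_real u * f2)
     + of_real (2 * \<beta>) * (of_real u * (abx \<beta> v \<xi> * f1 + of_real u * f2) + of_real v * (\<i> * of_real \<xi>) * (abx \<beta> v \<xi> * f0 + of_real u * f1))
     - of_real (c^2 - v^2) * (\<i> * of_real \<xi>)^2 * (abx \<beta> v \<xi> * f0 + of_real u * f1)
     - of_real (c^2 - u^2) * (abx \<beta> v \<xi> * f2 + of_real u * f3)"

lemma LGx_norm:
  assumes ab: "abx \<beta> v \<xi> = - complex_of_real u * l0"
    and s: "(lp + lm) * complex_of_real (c^2 - u^2) = 2 * complex_of_real u * abx \<beta> v \<xi>"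
    and p: "lp * lm * complex_of_real (c^2 - u^2) = - (abx \<beta> v \<xi> ^ 2 + complex_of_real (c^2 * \<xi>^2))"
  shows "LGx \<beta> c u v \<xi> f0 f1 f2 f3 = - (complex_of_real (c^2 - u^2) * complex_of_real u) *
     (f3 - (lp + lm + l0) * f2 + (lp * lm + lp * l0 + lm * l0) * f1 - lp * lm * l0 * f0)"
proof -
  define A where "A = abx \<beta> v \<xi>"
  define d where "d = complex_of_real (c^2 - u^2)"
  define W where "W = A * f0 + of_real u * f1"
  define W1 where "W1 = A * f1 + of_real u * f2"
  define W2 where "W2 = A * f2 + of_real u * f3"
  have e1: "LGx \<beta> c u v \<xi> f0 f1 f2 f3 = (A^2 + complex_of_real (c^2 * \<xi>^2)) * W + (2 * complex_of_real u * A) * W1 - d * W2"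
    unfolding LGx_def A_def W_def W1_def W2_def d_def abx_def
    by (simp add: algebra_simps power2_eq_square)
  also have "\<dots> = - (lp * lm * d) * W + ((lp + lm) * d) * W1 - d * W2"
    using s p unfolding A_def[symmetric] d_def[symmetric] by simp
  also have "\<dots> = - (d * complex_of_real u) * (f3 - (lp + lm + l0) * f2 + (lp * lm + lp * l0 + lm * l0) * f1 - lp * lm * l0 * f0)"
    unfolding W_def W1_def W2_def A_def ab by (simp add: algebra_simps)
  finally show ?thesis unfolding d_def .
qed

lemma smooth_jet: "smooth3 S f \<Longrightarrow> jet3 S f (Dx S f) (Dx S (Dx S f)) (Dx S (Dx S (Dx S f)))"
  unfolding smooth3_def jet3_def by blast

lemma jet_sub: "jet3 UNIV f f1 f2 f3 \<Longrightarrow> jet3 S f f1 f2 f3"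
  unfolding jet3_def by (auto intro: has_vector_derivative_at_within)

lemma jet_diff: "jet3 S f f1 f2 f3 \<Longrightarrow> jet3 S g g1 g2 g3 \<Longrightarrow>
   jet3 S (\<lambda>x. f x - g x) (\<lambda>x. f1 x - g1 x) (\<lambda>x. f2 x - g2 x) (\<lambda>x. f3 x - g3 x)"
  unfolding jet3_def by (auto intro!: has_vector_derivative_diff)

lemma jet_zero: "jet3 S (\<lambda>_. 0) (\<lambda>_. 0) (\<lambda>_. 0) (\<lambda>_. 0)"
  unfolding jet3_def by (auto intro: has_vector_derivative_const)

lemma Gh_fun: "Gh \<beta> u v S \<xi> f = (\<lambda>y. abx \<beta> v \<xi> * f y + of_real u * Dx S f y)"
  unfolding Gh_def abx_def by (auto simp: algebra_simps)

lemma GhD: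
  assumes nb: "\<forall>x\<in>S. at x within S \<noteq> bot" and sm: "smooth3 S f" and x: "x \<in> S"
  shows "Dx S (Gh \<beta> u v S \<xi> f) x = abx \<beta> v \<xi> * Dx S f x + of_real u * Dx S (Dx S f) x"
proof -
  have j: "jet3 S f (Dx S f) (Dx S (Dx S f)) (Dx S (Dx S (Dx S f)))" by (rule smooth_jet[OF sm])
  have "((\<lambda>y. abx \<beta> v \<xi> * f y + of_real u * Dx S f y) has_vector_derivative abx \<beta> v \<xi> * Dx S f x + of_real u * Dx S (Dx S f) x) (at x within S)"
    using j x unfolding jet3_def by (auto intro!: has_vector_derivative_add has_vector_derivative_mult_right)
  then show ?thesis unfolding Dx_def Gh_fun by (rule vector_derivative_within[OF nb[rule_format, OF x]])
qed

lemma GhDD: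
  assumes nb: "\<forall>x\<in>S. at x within S \<noteq> bot" and sm: "smooth3 S f" and x: "x \<in> S"
  shows "Dx S (Dx S (Gh \<beta> u v S \<xi> f)) x = abx \<beta> v \<xi> * Dx S (Dx S f) x + of_real u * Dx S (Dx S (Dx S f)) x"
proof -
  have j: "jet3 S f (Dx S f) (Dx S (Dx S f)) (Dx S (Dx S (Dx S f)))" by (rule smooth_jet[OF sm])
  have "((\<lambda>y. abx \<beta> v \<xi> * Dx S f y + of_real u * Dx S (Dx S f) y) has_vector_derivative abx \<beta> v \<xi> * Dx S (Dx S f) x + of_real u * Dx S (Dx S (Dx S f)) x) (at x within S)"
    using j x unfolding jet3_def by (auto intro!: has_vector_derivative_add has_vector_derivative_mult_right)
  then have "(Dx S (Gh \<beta> u v S \<xi> f) has_vector_derivative abx \<beta> v \<xi> * Dx S (Dx S f) x + of_real u * Dx S (Dx S (Dx S f)) x) (at x within S)"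
    by (rule has_vector_derivative_transform_within[OF _ zero_less_one x]) (simp add: GhD[OF nb sm])
  then show ?thesis unfolding Dx_def[of S "Dx S (Gh \<beta> u v S \<xi> f)"] by (rule vector_derivative_within[OF nb[rule_format, OF x]])
qed

lemma LhG:
  assumes nb: "\<forall>x\<in>S. at x within S \<noteq> bot" and sm: "smooth3 S f" and x: "x \<in> S"
  shows "Lh \<beta> c u v S \<xi> (Gh \<beta> u v S \<xi> f) x = LGx \<beta> c u v \<xi> (f x) (Dx S f x) (Dx S (Dx S f) x) (Dx S (Dx S (Dx S f)) x)"
  unfolding Lh_def GhDD[OF nb sm x] GhD[OF nb sm x] LGx_def
  by (simp add: Gh_fun)

lemma LGx_diff: "LGx \<beta> c u v \<xi> (a0 - b0) (a1 - b1) (a2 - b2) (a3 - b3) = LGx \<beta> c u v \<xi> a0 a1 a2 a3 - LGx \<beta> c u v \<xi> b0 b1 b2 b3"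
  unfolding LGx_def by (simp add: algebra_simps)

lemma LGx_zero: "LGx \<beta> c u v \<xi> 0 0 0 0 = 0"
  unfolding LGx_def by simp

lemma bounded_diff_img:
  fixes f g :: "'a \<Rightarrow> 'b::real_normed_vector"
  assumes "bounded (f ` S)" "bounded (g ` S)"
  shows "bounded ((\<lambda>x. f x - g x) ` S)"
proof -
  obtain M1 where M1: "\<forall>x\<in>S. norm (f x) \<le> M1" using bounded_normD[OF assms(1)] by blast
  obtain M2 where M2: "\<forall>x\<in>S. norm (g x) \<le> M2" using bounded_normD[OF assms(2)] by blast
  show ?thesis unfolding bounded_iff
  proof (intro exI ballI)
    fix z assume "z \<in> (\<lambda>x. f x - g x) ` S"
    then obtain x where x: "x \<in> S" "z = f x - g x" by auto
    have "norm z \<le> norm (f x) + norm (g x)" using x(2) norm_triangle_ineq4 by simp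
    also have "\<dots> \<le> M1 + M2" using M1 M2 x(1) by (intro add_mono) auto
    finally show "norm z \<le> M1 + M2" .
  qed
qed

lemma nbS1: "\<forall>x\<in>{..(0::real)}. at x within {..0} \<noteq> bot" using nb1 by auto
lemma nbS2: "\<forall>x\<in>{(0::real)..}. at x within {0..} \<noteq> bot" using nb2 by auto

lemma omega1:
  fixes lp lm l0 :: complex
  assumes rp: "Re lp > 0" and rm: "Re lm < 0" and r0: "Re l0 < 0"
    and ab: "abx \<beta> v \<xi> = - complex_of_real u * l0"
    and vs: "(lp + lm) * complex_of_real (c^2 - u^2) = 2 * complex_of_real u * abx \<beta> v \<xi>"
    and vp: "lp * lm * complex_of_real (c^2 - u^2) = - (abx \<beta> v \<xi> ^ 2 + complex_of_real (c^2 * \<xi>^2))"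
    and cu: "c^2 - u^2 \<noteq> 0" and u: "u \<noteq> 0"
    and sm: "smooth3 {..0} F" and bF: "bounded (F ` {..0})"
    and jq: "jet3 UNIV q q1 q2 q3" and bq: "bounded (q ` {..0})"
    and ode: "\<forall>x<0. Lh \<beta> c u v {..0} \<xi> (Gh \<beta> u v {..0} \<xi> F) x = LGx \<beta> c u v \<xi> (q x) (q1 x) (q2 x) (q3 x)"
  shows "\<forall>x\<le>0. F x - q x = (F 0 - q 0) * exp (lp * of_real x)"
    and "Dx {..0} F 0 - q1 0 = lp * (F 0 - q 0)"
    and "Dx {..0} (Dx {..0} F) 0 - q2 0 = lp * lp * (F 0 - q 0)"
proof -
  let ?S = "{..(0::real)}"
  note j = jet_diff[OF smooth_jet[OF sm] jet_sub[OF jq]]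
  have b: "bounded ((\<lambda>x. F x - q x) ` ?S)" by (rule bounded_diff_img[OF bF bq])
  have c1: "complex_of_real (c^2 - u^2) \<noteq> 0" using cu by (subst of_real_eq_0_iff)
  have c2: "complex_of_real u \<noteq> 0" using u by simp
  have cz: "- (complex_of_real (c^2 - u^2) * complex_of_real u) \<noteq> 0" using c1 c2 by (metis mult_eq_0_iff neg_equal_0_iff_equal)
  have o: "Dx ?S (Dx ?S (Dx ?S F)) x - q3 x - (lp + lm + l0) * (Dx ?S (Dx ?S F) x - q2 x) + (lp * lm + lp * l0 + lm * l0) * (Dx ?S F x - q1 x) - lp * lm * l0 * (F x - q x) = 0"
    if x: "x < 0" for x
  proof -
    have "LGx \<beta> c u v \<xi> (F x - q x) (Dx ?S F x - q1 x) (Dx ?S (Dx ?S F) x - q2 x) (Dx ?S (Dx ?S (Dx ?S F)) x - q3 x) = 0"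
    proof -
      have xs: "x \<in> ?S" using x by simp
      have e1: "Lh \<beta> c u v ?S \<xi> (Gh \<beta> u v ?S \<xi> F) x = LGx \<beta> c u v \<xi> (F x) (Dx ?S F x) (Dx ?S (Dx ?S F) x) (Dx ?S (Dx ?S (Dx ?S F)) x)"
        by (rule LhG[OF nbS1 sm xs])
      have e2: "Lh \<beta> c u v ?S \<xi> (Gh \<beta> u v ?S \<xi> F) x = LGx \<beta> c u v \<xi> (q x) (q1 x) (q2 x) (q3 x)"
        using ode x by blast
      show ?thesis unfolding LGx_diff using e1 e2 by (metis diff_self)
    qed
    then have "- (complex_of_real (c^2 - u^2) * complex_of_real u) * (Dx ?S (Dx ?S (Dx ?S F)) x - q3 x - (lp + lm + l0) * (Dx ?S (Dx ?S F) x - q2 x) + (lp * lm + lp * l0 + lm * l0) * (Dx ?S F x - q1 x) - lp * lm * l0 * (F x - q x)) = 0"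
      by (simp only: LGx_norm[OF ab vs vp])
    then show ?thesis by (meson cz mult_eq_0_iff)
  qed
  note R = F1[OF j b o rp rm r0]
  show "\<forall>x\<le>0. F x - q x = (F 0 - q 0) * exp (lp * of_real x)" using R(1) by blast
  show "Dx {..0} F 0 - q1 0 = lp * (F 0 - q 0)" using R(2) by blast
  show "Dx {..0} (Dx {..0} F) 0 - q2 0 = lp * lp * (F 0 - q 0)" using R(3) by blast
qed

lemma omega2:
  fixes lp lm l0 :: complex
  assumes rp: "Re lp > 0" and rm: "Re lm < 0" and r0: "Re l0 < 0"
    and ab: "abx \<beta> v \<xi> = - complex_of_real u * l0"
    and vs: "(lp + lm) * complex_of_real (c^2 - u^2) = 2 * complex_of_real u * abx \<beta> v \<xi>"
    and vp: "lp * lm * complex_of_real (c^2 - u^2) = - (abx \<beta> v \<xi> ^ 2 + complex_of_real (c^2 * \<xi>^2))"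
    and cu: "c^2 - u^2 \<noteq> 0" and u: "u \<noteq> 0"
    and sm: "smooth3 {0..} F" and bF: "bounded (F ` {0..})"
    and jq: "jet3 UNIV q q1 q2 q3" and bq: "bounded (q ` {0..})"
    and ode: "\<forall>x>0. Lh \<beta> c u v {0..} \<xi> (Gh \<beta> u v {0..} \<xi> F) x = LGx \<beta> c u v \<xi> (q x) (q1 x) (q2 x) (q3 x)"
  shows "\<forall>x\<ge>0. (Dx {0..} (Dx {0..} F) x - q2 x) - (lm + l0) * (Dx {0..} F x - q1 x) + lm * l0 * (F x - q x) = 0"
proof -
  let ?S = "{(0::real)..}"
  note j = jet_diff[OF smooth_jet[OF sm] jet_sub[OF jq]]
  have b: "bounded ((\<lambda>x. F x - q x) ` ?S)" by (rule bounded_diff_img[OF bF bq])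
  have c1: "complex_of_real (c^2 - u^2) \<noteq> 0" using cu by (subst of_real_eq_0_iff)
  have c2: "complex_of_real u \<noteq> 0" using u by simp
  have cz: "- (complex_of_real (c^2 - u^2) * complex_of_real u) \<noteq> 0" using c1 c2 by (metis mult_eq_0_iff neg_equal_0_iff_equal)
  have o: "Dx ?S (Dx ?S (Dx ?S F)) x - q3 x - (lp + lm + l0) * (Dx ?S (Dx ?S F) x - q2 x) + (lp * lm + lp * l0 + lm * l0) * (Dx ?S F x - q1 x) - lp * lm * l0 * (F x - q x) = 0"
    if x: "x > 0" for x
  proof -
    have "LGx \<beta> c u v \<xi> (F x - q x) (Dx ?S F x - q1 x) (Dx ?S (Dx ?S F) x - q2 x) (Dx ?S (Dx ?S (Dx ?S F)) x - q3 x) = 0"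
    proof -
      have xs: "x \<in> ?S" using x by simp
      have e1: "Lh \<beta> c u v ?S \<xi> (Gh \<beta> u v ?S \<xi> F) x = LGx \<beta> c u v \<xi> (F x) (Dx ?S F x) (Dx ?S (Dx ?S F) x) (Dx ?S (Dx ?S (Dx ?S F)) x)"
        by (rule LhG[OF nbS2 sm xs])
      have e2: "Lh \<beta> c u v ?S \<xi> (Gh \<beta> u v ?S \<xi> F) x = LGx \<beta> c u v \<xi> (q x) (q1 x) (q2 x) (q3 x)"
        using ode x by blast
      show ?thesis unfolding LGx_diff using e1 e2 by (metis diff_self)
    qed
    then have "- (complex_of_real (c^2 - u^2) * complex_of_real u) * (Dx ?S (Dx ?S (Dx ?S F)) x - q3 x - (lp + lm + l0) * (Dx ?S (Dx ?S F) x - q2 x) + (lp * lm + lp * l0 + lm * l0) * (Dx ?S F x - q1 x) - lp * lm * l0 * (F x - q x)) = 0"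
      by (simp only: LGx_norm[OF ab vs vp])
    then show ?thesis by (meson cz mult_eq_0_iff)
  qed
  from F2[OF j b o rp rm r0] show ?thesis by blast
qed

lemma F2_zero:
  fixes lm l0 :: complex
  assumes j: "jet3 {0..} f f1 f2 f3"
    and y: "\<forall>x\<ge>0. f2 x - (lm + l0) * f1 x + lm * l0 * f x = 0"
    and f0: "f 0 = 0" and f10: "f1 0 = 0" and x: "x \<ge> 0"
  shows "f x = 0"
proof -
  have S: "convex {(0::real)..}" "(0::real) \<in> {0..}" by auto
  have z: "f1 x - l0 * f x = 0" if x: "x \<in> {0..}" for x
  proof -
    have "f1 x - l0 * f x = (f1 0 - l0 * f 0) * exp (lm * of_real x)"
    proof (rule FO[OF S, where y' = "\<lambda>x. f2 x - l0 * f1 x"])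
      fix x :: real assume x: "x \<in> {0..}"
      show "((\<lambda>x. f1 x - l0 * f x) has_vector_derivative f2 x - l0 * f1 x) (at x within {0..})"
        using j x unfolding jet3_def by (auto intro!: has_vector_derivative_diff has_vector_derivative_mult_right)
      have "f2 x - (lm + l0) * f1 x + lm * l0 * f x = 0" using y x by auto
      then show "f2 x - l0 * f1 x = lm * (f1 x - l0 * f x)" by (simp add: algebra_simps)
    qed (use x in auto)
    then show ?thesis using f0 f10 by simp
  qed
  have "f x = f 0 * exp (l0 * of_real x)"
  proof (rule FO[OF S, where y' = f1])
    fix x :: real assume x: "x \<in> {0..}"
    show "(f has_vector_derivative f1 x) (at x within {0..})" using j x unfolding jet3_def by auto
    show "f1 x = l0 * f x" using z[OF x] by simp
  qed (use x in auto)
  then show ?thesis using f0 by simp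
qed




theorem mainTheorem2:
  fixes \<beta> c u v :: real
    and g Q :: "real \<Rightarrow> real \<Rightarrow> complex"
    and Q1 Q2 Qt1 Qt2 :: "nat \<Rightarrow> real \<Rightarrow> real \<Rightarrow> complex"
  assumes "\<beta> > 0" and "c > 0" and "0 < u" and "u < c"
    \<comment> \<open>Q solves L G Q = g in R^2 (Fourier sense: bounded in x for each xi)\<close>
    and sol: "\<forall>\<xi>. smooth3 UNIV (Q \<xi>) \<and> bounded (range (Q \<xi>)) \<and>
               (\<forall>x. Lh \<beta> c u v UNIV \<xi> (Gh \<beta> u v UNIV \<xi> (Q \<xi>)) x = g \<xi> x)"
    \<comment> \<open>initial values with G Q^{1,0} = G Q^{2,0} on Gamma\<close>
    and init: "\<forall>\<xi>. smooth3 {..0} (Q1 0 \<xi>) \<and> smooth3 {0..} (Q2 0 \<xi>) \<and>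
               Gh \<beta> u v {..0} \<xi> (Q1 0 \<xi>) 0 = Gh \<beta> u v {0..} \<xi> (Q2 0 \<xi>) 0"
    \<comment> \<open>correction step, first subdomain\<close>
    and corr1: "\<forall>k \<xi>. smooth3 {..0} (Qt1 k \<xi>) \<and> bounded (Qt1 k \<xi> ` {..0}) \<and>
               (\<forall>x<0. Lh \<beta> c u v {..0} \<xi> (Gh \<beta> u v {..0} \<xi> (Qt1 k \<xi>)) x = 0) \<and>
               conormal c u v {..0} \<xi> n1 (Gh \<beta> u v {..0} \<xi> (Qt1 k \<xi>)) 0
                 - of_real (a_dot \<beta> u v n1 / 2) * Gh \<beta> u v {..0} \<xi> (Qt1 k \<xi>) 0
               = - (1/2) * (conormal c u v {..0} \<xi> n1 (Gh \<beta> u v {..0} \<xi> (Q1 k \<xi>)) 0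
                            + conormal c u v {0..} \<xi> n2 (Gh \<beta> u v {0..} \<xi> (Q2 k \<xi>)) 0)"
    \<comment> \<open>correction step, second subdomain\<close>
    and corr2: "\<forall>k \<xi>. smooth3 {0..} (Qt2 k \<xi>) \<and> bounded (Qt2 k \<xi> ` {0..}) \<and>
               (\<forall>x>0. Lh \<beta> c u v {0..} \<xi> (Gh \<beta> u v {0..} \<xi> (Qt2 k \<xi>)) x = 0) \<and>
               conormal c u v {0..} \<xi> n2 (Gh \<beta> u v {0..} \<xi> (Qt2 k \<xi>)) 0
                 - of_real (a_dot \<beta> u v n2 / 2) * Gh \<beta> u v {0..} \<xi> (Qt2 k \<xi>) 0
               = - (1/2) * (conormal c u v {..0} \<xi> n1 (Gh \<beta> u v {..0} \<xi> (Q1 k \<xi>)) 0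
                            + conormal c u v {0..} \<xi> n2 (Gh \<beta> u v {0..} \<xi> (Q2 k \<xi>)) 0) \<and>
               Qt2 k \<xi> 0 = 0"
    \<comment> \<open>update step, first subdomain\<close>
    and upd1: "\<forall>k \<xi>. smooth3 {..0} (Q1 (Suc k) \<xi>) \<and> bounded (Q1 (Suc k) \<xi> ` {..0}) \<and>
               (\<forall>x<0. Lh \<beta> c u v {..0} \<xi> (Gh \<beta> u v {..0} \<xi> (Q1 (Suc k) \<xi>)) x = g \<xi> x) \<and>
               Gh \<beta> u v {..0} \<xi> (Q1 (Suc k) \<xi>) 0
               = Gh \<beta> u v {..0} \<xi> (Q1 k \<xi>) 0
                 + (1/2) * (Gh \<beta> u v {..0} \<xi> (Qt1 k \<xi>) 0 + Gh \<beta> u v {0..} \<xi> (Qt2 k \<xi>) 0)"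
    \<comment> \<open>update step, second subdomain\<close>
    and upd2: "\<forall>k \<xi>. smooth3 {0..} (Q2 (Suc k) \<xi>) \<and> bounded (Q2 (Suc k) \<xi> ` {0..}) \<and>
               (\<forall>x>0. Lh \<beta> c u v {0..} \<xi> (Gh \<beta> u v {0..} \<xi> (Q2 (Suc k) \<xi>)) x = g \<xi> x) \<and>
               Gh \<beta> u v {0..} \<xi> (Q2 (Suc k) \<xi>) 0
               = Gh \<beta> u v {0..} \<xi> (Q2 k \<xi>) 0
                 + (1/2) * (Gh \<beta> u v {..0} \<xi> (Qt1 k \<xi>) 0 + Gh \<beta> u v {0..} \<xi> (Qt2 k \<xi>) 0) \<and>
               Q2 (Suc k) \<xi> 0 = Q1 k \<xi> 0 + Qt1 k \<xi> 0"
  shows "\<forall>\<xi>. (\<forall>x<0. Q1 2 \<xi> x = Q \<xi> x) \<and> (\<forall>x>0. Q2 2 \<xi> x = Q \<xi> x)"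
proof (intro allI)
  fix \<xi> :: real
  obtain lp lm l0 where rp: "Re lp > 0" and rm: "Re lm < 0" and r0: "Re l0 < 0"
    and ab: "abx \<beta> v \<xi> = - complex_of_real u * l0"
    and vs: "(lp + lm) * complex_of_real (c^2 - u^2) = 2 * complex_of_real u * abx \<beta> v \<xi>"
    and vp: "lp * lm * complex_of_real (c^2 - u^2) = - (abx \<beta> v \<xi> ^ 2 + complex_of_real (c^2 * \<xi>^2))"
    using roots[OF assms(1-4), of v \<xi>] by blast
  have u0: "u \<noteq> 0" using assms by simp
  have cu: "c^2 - u^2 \<noteq> 0" using assms by (simp add: power_strict_mono)
  let ?S1 = "{..(0::real)}" and ?S2 = "{(0::real)..}"
  have z1: "(0::real) \<in> ?S1" and z2: "(0::real) \<in> ?S2" by auto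
  define ab where "ab = abx \<beta> v \<xi>"
  define \<nu> where "\<nu> = complex_of_real (c^2 - u^2)"
  define q where "q = Q \<xi>"
  define q1 where "q1 = Dx UNIV q"
  define q2 where "q2 = Dx UNIV q1"
  define q3 where "q3 = Dx UNIV q2"
  have smQ: "smooth3 UNIV q" using sol unfolding q_def by blast
  have jQ: "jet3 UNIV q q1 q2 q3" unfolding q1_def q2_def q3_def by (rule smooth_jet[OF smQ])
  have bQ: "bounded (q ` S)" for S using sol unfolding q_def by (meson bounded_subset image_mono subset_UNIV)
  have nbU: "\<forall>x\<in>UNIV. at (x::real) within UNIV \<noteq> bot" by simp
  have LQ: "LGx \<beta> c u v \<xi> (q x) (q1 x) (q2 x) (q3 x) = g \<xi> x" for x
  proof -
    have "Lh \<beta> c u v UNIV \<xi> (Gh \<beta> u v UNIV \<xi> q) x = g \<xi> x" using sol unfolding q_def by blast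
    then show ?thesis using LhG[OF nbU smQ, of x \<beta> c u v \<xi>] unfolding q1_def q2_def q3_def by simp
  qed
  note jZ = jet_zero[of UNIV]
  have bZ: "bounded ((\<lambda>_::real. 0::complex) ` S)" for S by (rule bounded_subset[of "{0}"]) auto
  note O1 = omega1[OF rp rm r0 ab vs vp cu u0]
  note O2 = omega2[OF rp rm r0 ab vs vp cu u0]

  have C1: "conormal c u v S \<xi> n1 w 0 = \<nu> * Dx S w 0 - complex_of_real (u * v) * (\<i> * complex_of_real \<xi>) * w 0" for S w
    unfolding conormal_def n1_def \<nu>_def by simp
  have C2: "conormal c u v S \<xi> n2 w 0 = - (\<nu> * Dx S w 0 - complex_of_real (u * v) * (\<i> * complex_of_real \<xi>) * w 0)" for S w
    unfolding conormal_def n2_def \<nu>_def by simp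
  have A1: "a_dot \<beta> u v n1 / 2 = \<beta> * u" unfolding a_dot_def n1_def by simp
  have A2: "a_dot \<beta> u v n2 / 2 = - (\<beta> * u)" unfolding a_dot_def n2_def by simp
  define Cn where "Cn = (\<lambda>W V. \<nu> * V - complex_of_real (u * v) * (\<i> * complex_of_real \<xi>) * W)"
  define W1 where "W1 = (\<lambda>k. Gh \<beta> u v ?S1 \<xi> (Q1 k \<xi>) 0)"
  define V1 where "V1 = (\<lambda>k. Dx ?S1 (Gh \<beta> u v ?S1 \<xi> (Q1 k \<xi>)) 0)"
  define W2 where "W2 = (\<lambda>k. Gh \<beta> u v ?S2 \<xi> (Q2 k \<xi>) 0)"
  define V2 where "V2 = (\<lambda>k. Dx ?S2 (Gh \<beta> u v ?S2 \<xi> (Q2 k \<xi>)) 0)"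
  define Wt1 where "Wt1 = (\<lambda>k. Gh \<beta> u v ?S1 \<xi> (Qt1 k \<xi>) 0)"
  define Vt1 where "Vt1 = (\<lambda>k. Dx ?S1 (Gh \<beta> u v ?S1 \<xi> (Qt1 k \<xi>)) 0)"
  define Wt2 where "Wt2 = (\<lambda>k. Gh \<beta> u v ?S2 \<xi> (Qt2 k \<xi>) 0)"
  define Vt2 where "Vt2 = (\<lambda>k. Dx ?S2 (Gh \<beta> u v ?S2 \<xi> (Qt2 k \<xi>)) 0)"
  define WQ where "WQ = ab * q 0 + complex_of_real u * q1 0"
  define VQ where "VQ = ab * q1 0 + complex_of_real u * q2 0"
  have corr1': "Cn (Wt1 k) (Vt1 k) - complex_of_real (\<beta> * u) * Wt1 k = - (1/2) * (Cn (W1 k) (V1 k) - Cn (W2 k) (V2 k))" for k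
    using corr1[rule_format, of k \<xi>] unfolding C1 C2 A1 Cn_def W1_def V1_def W2_def V2_def Wt1_def Vt1_def by simp
  have corr2': "- Cn (Wt2 k) (Vt2 k) + complex_of_real (\<beta> * u) * Wt2 k = - (1/2) * (Cn (W1 k) (V1 k) - Cn (W2 k) (V2 k))" for k
    using corr2[rule_format, of k \<xi>] unfolding C1 C2 A2 Cn_def W1_def V1_def W2_def V2_def Wt2_def Vt2_def by simp
  have upd1': "W1 (Suc k) = W1 k + (1/2) * (Wt1 k + Wt2 k)" for k
    using upd1[rule_format, of k \<xi>] unfolding W1_def Wt1_def Wt2_def by blast
  have upd2': "W2 (Suc k) = W2 k + (1/2) * (Wt1 k + Wt2 k)" and upd2'': "Q2 (Suc k) \<xi> 0 = Q1 k \<xi> 0 + Qt1 k \<xi> 0" for k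
    using upd2[rule_format, of k \<xi>] unfolding W2_def Wt1_def Wt2_def by blast+
  have init': "W1 0 = W2 0" using init unfolding W1_def W2_def by blast

  have WV1: "Gh \<beta> u v ?S1 \<xi> F 0 = ab * F 0 + complex_of_real u * Dx ?S1 F 0 \<and>
      Dx ?S1 (Gh \<beta> u v ?S1 \<xi> F) 0 = ab * Dx ?S1 F 0 + complex_of_real u * Dx ?S1 (Dx ?S1 F) 0"
    if "smooth3 ?S1 F" for F
    using GhD[OF nbS1 that z1, of \<beta> u v \<xi>] unfolding ab_def by (simp add: Gh_fun)
  have WV2: "Gh \<beta> u v ?S2 \<xi> F 0 = ab * F 0 + complex_of_real u * Dx ?S2 F 0 \<and>
      Dx ?S2 (Gh \<beta> u v ?S2 \<xi> F) 0 = ab * Dx ?S2 F 0 + complex_of_real u * Dx ?S2 (Dx ?S2 F) 0"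
    if "smooth3 ?S2 F" for F
    using GhD[OF nbS2 that z2, of \<beta> u v \<xi>] unfolding ab_def by (simp add: Gh_fun)
  have t1: "Wt1 k = (ab + complex_of_real u * lp) * Qt1 k \<xi> 0 \<and> Vt1 k = lp * Wt1 k" for k
  proof -
    have sm: "smooth3 ?S1 (Qt1 k \<xi>)" and bd: "bounded (Qt1 k \<xi> ` ?S1)"
      and od: "\<forall>x<0. Lh \<beta> c u v ?S1 \<xi> (Gh \<beta> u v ?S1 \<xi> (Qt1 k \<xi>)) x = 0" using corr1 by blast+
    have od': "\<forall>x<0. Lh \<beta> c u v ?S1 \<xi> (Gh \<beta> u v ?S1 \<xi> (Qt1 k \<xi>)) x = LGx \<beta> c u v \<xi> ((\<lambda>_. 0) x) ((\<lambda>_. 0) x) ((\<lambda>_. 0) x) ((\<lambda>_. 0) x)"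
      using od LGx_zero by simp
    note R = O1[OF sm bd jZ bZ od']
    have d1: "Dx ?S1 (Qt1 k \<xi>) 0 = lp * Qt1 k \<xi> 0" using R(2) by simp
    have d2: "Dx ?S1 (Dx ?S1 (Qt1 k \<xi>)) 0 = lp * lp * Qt1 k \<xi> 0" using R(3) by simp
    show ?thesis using WV1[OF sm] d1 d2 unfolding Wt1_def Vt1_def by (simp add: algebra_simps)
  qed
  have t2: "Vt2 k = lm * Wt2 k" for k
  proof -
    have sm: "smooth3 ?S2 (Qt2 k \<xi>)" and bd: "bounded (Qt2 k \<xi> ` ?S2)"
      and od: "\<forall>x>0. Lh \<beta> c u v ?S2 \<xi> (Gh \<beta> u v ?S2 \<xi> (Qt2 k \<xi>)) x = 0" using corr2 by blast+
    have od': "\<forall>x>0. Lh \<beta> c u v ?S2 \<xi> (Gh \<beta> u v ?S2 \<xi> (Qt2 k \<xi>)) x = LGx \<beta> c u v \<xi> ((\<lambda>_. 0) x) ((\<lambda>_. 0) x) ((\<lambda>_. 0) x) ((\<lambda>_. 0) x)"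
      using od LGx_zero by simp
    have y: "Dx ?S2 (Dx ?S2 (Qt2 k \<xi>)) 0 - (lm + l0) * Dx ?S2 (Qt2 k \<xi>) 0 + lm * l0 * Qt2 k \<xi> 0 = 0"
      using O2[OF sm bd jZ bZ od'] by simp
    have "Vt2 k - lm * Wt2 k = complex_of_real u * (Dx ?S2 (Dx ?S2 (Qt2 k \<xi>)) 0 - (lm + l0) * Dx ?S2 (Qt2 k \<xi>) 0 + lm * l0 * Qt2 k \<xi> 0)"
    proof -
      have w: "Wt2 k = ab * Qt2 k \<xi> 0 + complex_of_real u * Dx ?S2 (Qt2 k \<xi>) 0"
        and v: "Vt2 k = ab * Dx ?S2 (Qt2 k \<xi>) 0 + complex_of_real u * Dx ?S2 (Dx ?S2 (Qt2 k \<xi>)) 0"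
        using WV2[OF sm] unfolding Wt2_def Vt2_def by blast+
      show ?thesis unfolding w v ab_def ab by (simp add: algebra_simps)
    qed
    then show ?thesis using y by simp
  qed
  have e1: "(\<forall>x\<le>0. Q1 (Suc k) \<xi> x - q x = (Q1 (Suc k) \<xi> 0 - q 0) * exp (lp * of_real x)) \<and>
      W1 (Suc k) - WQ = (ab + complex_of_real u * lp) * (Q1 (Suc k) \<xi> 0 - q 0) \<and>
      V1 (Suc k) - VQ = lp * (W1 (Suc k) - WQ)" for k
  proof -
    have sm: "smooth3 ?S1 (Q1 (Suc k) \<xi>)" and bd: "bounded (Q1 (Suc k) \<xi> ` ?S1)"
      and od: "\<forall>x<0. Lh \<beta> c u v ?S1 \<xi> (Gh \<beta> u v ?S1 \<xi> (Q1 (Suc k) \<xi>)) x = g \<xi> x" using upd1 by blast+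
    have od': "\<forall>x<0. Lh \<beta> c u v ?S1 \<xi> (Gh \<beta> u v ?S1 \<xi> (Q1 (Suc k) \<xi>)) x = LGx \<beta> c u v \<xi> (q x) (q1 x) (q2 x) (q3 x)"
      using od LQ by simp
    note R = O1[OF sm bd jQ bQ od']
    have "W1 (Suc k) - WQ = ab * (Q1 (Suc k) \<xi> 0 - q 0) + complex_of_real u * (Dx ?S1 (Q1 (Suc k) \<xi>) 0 - q1 0)"
      using WV1[OF sm] unfolding W1_def WQ_def by (simp add: algebra_simps)
    also have "\<dots> = (ab + complex_of_real u * lp) * (Q1 (Suc k) \<xi> 0 - q 0)" unfolding R(2) by (simp add: algebra_simps)
    finally have w: "W1 (Suc k) - WQ = (ab + complex_of_real u * lp) * (Q1 (Suc k) \<xi> 0 - q 0)" .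
    have "V1 (Suc k) - VQ = ab * (Dx ?S1 (Q1 (Suc k) \<xi>) 0 - q1 0) + complex_of_real u * (Dx ?S1 (Dx ?S1 (Q1 (Suc k) \<xi>)) 0 - q2 0)"
      using WV1[OF sm] unfolding V1_def VQ_def by (simp add: algebra_simps)
    also have "\<dots> = lp * (W1 (Suc k) - WQ)" unfolding w R(2) R(3) by (simp add: algebra_simps)
    finally show ?thesis using R(1) w by blast
  qed
  have e2: "(\<forall>x\<ge>0. (Dx ?S2 (Dx ?S2 (Q2 (Suc k) \<xi>)) x - q2 x) - (lm + l0) * (Dx ?S2 (Q2 (Suc k) \<xi>) x - q1 x) + lm * l0 * (Q2 (Suc k) \<xi> x - q x) = 0) \<and>
      W2 (Suc k) - WQ = ab * (Q2 (Suc k) \<xi> 0 - q 0) + complex_of_real u * (Dx ?S2 (Q2 (Suc k) \<xi>) 0 - q1 0) \<and>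
      V2 (Suc k) - VQ = lm * (W2 (Suc k) - WQ)" for k
  proof -
    have sm: "smooth3 ?S2 (Q2 (Suc k) \<xi>)" and bd: "bounded (Q2 (Suc k) \<xi> ` ?S2)"
      and od: "\<forall>x>0. Lh \<beta> c u v ?S2 \<xi> (Gh \<beta> u v ?S2 \<xi> (Q2 (Suc k) \<xi>)) x = g \<xi> x" using upd2 by blast+
    have od': "\<forall>x>0. Lh \<beta> c u v ?S2 \<xi> (Gh \<beta> u v ?S2 \<xi> (Q2 (Suc k) \<xi>)) x = LGx \<beta> c u v \<xi> (q x) (q1 x) (q2 x) (q3 x)"
      using od LQ by simp
    note R = O2[OF sm bd jQ bQ od']
    have w: "W2 (Suc k) - WQ = ab * (Q2 (Suc k) \<xi> 0 - q 0) + complex_of_real u * (Dx ?S2 (Q2 (Suc k) \<xi>) 0 - q1 0)"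
      using WV2[OF sm] unfolding W2_def WQ_def by (simp add: algebra_simps)
    have y: "(Dx ?S2 (Dx ?S2 (Q2 (Suc k) \<xi>)) 0 - q2 0) - (lm + l0) * (Dx ?S2 (Q2 (Suc k) \<xi>) 0 - q1 0) + lm * l0 * (Q2 (Suc k) \<xi> 0 - q 0) = 0"
      using R by simp
    have "V2 (Suc k) - VQ - lm * (W2 (Suc k) - WQ) = complex_of_real u * ((Dx ?S2 (Dx ?S2 (Q2 (Suc k) \<xi>)) 0 - q2 0) - (lm + l0) * (Dx ?S2 (Q2 (Suc k) \<xi>) 0 - q1 0) + lm * l0 * (Q2 (Suc k) \<xi> 0 - q 0))"
    proof -
      have ww: "W2 (Suc k) = ab * Q2 (Suc k) \<xi> 0 + complex_of_real u * Dx ?S2 (Q2 (Suc k) \<xi>) 0"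
        and vv: "V2 (Suc k) = ab * Dx ?S2 (Q2 (Suc k) \<xi>) 0 + complex_of_real u * Dx ?S2 (Dx ?S2 (Q2 (Suc k) \<xi>)) 0"
        using WV2[OF sm] unfolding W2_def V2_def by blast+
      show ?thesis unfolding ww vv WQ_def VQ_def ab_def ab by (simp add: algebra_simps)
    qed
    then have "V2 (Suc k) - VQ = lm * (W2 (Suc k) - WQ)" using y by simp
    then show ?thesis using R w by blast
  qed

  define \<sigma> where "\<sigma> = \<nu> * lp - complex_of_real u * ab"
  have ab_exp: "complex_of_real u * ab = complex_of_real (\<beta> * u) + complex_of_real (u * v) * (\<i> * complex_of_real \<xi>)"
    unfolding ab_def abx_def by (simp add: algebra_simps)
  have sig2: "2 * \<sigma> = \<nu> * (lp - lm)"
  proof -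
    have "(lp + lm) * \<nu> = 2 * complex_of_real u * ab" using vs unfolding \<nu>_def ab_def .
    then show ?thesis unfolding \<sigma>_def by (simp add: algebra_simps)
  qed
  have cpos: "c^2 - u^2 > 0" using assms by (simp add: power_strict_mono)
  have sig0: "\<sigma> \<noteq> 0"
  proof
    assume "\<sigma> = 0"
    then have "\<nu> * (lp - lm) = 0" using sig2 by simp
    then have "complex_of_real (c^2 - u^2) * (lp - lm) = 0" unfolding \<nu>_def .
    moreover have "complex_of_real (c^2 - u^2) \<noteq> 0" using cpos by (subst of_real_eq_0_iff) simp
    ultimately have "lp - lm = 0" by (metis mult_eq_0_iff)
    then have "lp = lm" by simp
    then show False using rp rm by simp
  qed
  have L1: "Cn (Wt1 k) (Vt1 k) - complex_of_real (\<beta> * u) * Wt1 k = \<sigma> * Wt1 k" for k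
  proof -
    have v: "Vt1 k = lp * Wt1 k" using t1[of k] by blast
    show ?thesis unfolding Cn_def \<sigma>_def ab_exp v by (simp add: algebra_simps)
  qed
  have L2: "- Cn (Wt2 k) (Vt2 k) + complex_of_real (\<beta> * u) * Wt2 k = \<sigma> * Wt2 k" for k
  proof -
    have "- Cn (Wt2 k) (Vt2 k) + complex_of_real (\<beta> * u) * Wt2 k = (complex_of_real u * ab - \<nu> * lm) * Wt2 k"
      unfolding Cn_def ab_exp t2[of k] by (simp add: algebra_simps)
    also have "complex_of_real u * ab - \<nu> * lm = \<sigma>" using sig2 unfolding \<sigma>_def by (simp add: algebra_simps)
    finally show ?thesis .
  qed
  have RW: "\<sigma> * Wt1 k = - (1/2) * (Cn (W1 k) (V1 k) - Cn (W2 k) (V2 k))" for k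
    using L1[of k] corr1'[of k] by simp
  have Weq: "Wt1 k = Wt2 k" for k
  proof -
    have "\<sigma> * Wt1 k = \<sigma> * Wt2 k" using L1[of k] L2[of k] corr1'[of k] corr2'[of k] by simp
    then show ?thesis using sig0 by simp
  qed
  have half: "(1/2) * (a + a) = (a::complex)" for a by simp
  have W11: "W1 1 = W1 0 + Wt1 0" using upd1'[of 0] unfolding Weq[of 0, symmetric] half by simp
  have W21: "W2 1 = W2 0 + Wt1 0" using upd2'[of 0] unfolding Weq[of 0, symmetric] half by simp
  have W1eq: "W2 1 = W1 1" using W11 W21 init' by simp
  have E10: "V1 1 - VQ = lp * (W1 1 - WQ)" and E10w: "W1 1 - WQ = (ab + complex_of_real u * lp) * (Q1 1 \<xi> 0 - q 0)"
    using e1[of 0] unfolding One_nat_def by blast+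
  have E20: "V2 1 - VQ = lm * (W2 1 - WQ)" using e2[of 0] unfolding One_nat_def by blast
  have V11: "V1 1 = lp * (W1 1 - WQ) + VQ" using E10 unfolding diff_eq_eq .
  have V21: "V2 1 = lm * (W1 1 - WQ) + VQ" using E20 unfolding diff_eq_eq W1eq .
  have "Cn (W1 1) (V1 1) - Cn (W2 1) (V2 1) = \<nu> * ((lp - lm) * (W1 1 - WQ))"
    unfolding Cn_def W1eq V11 V21 by (simp add: algebra_simps)
  also have "\<nu> * ((lp - lm) * (W1 1 - WQ)) = 2 * \<sigma> * (W1 1 - WQ)" unfolding mult.assoc[symmetric] sig2 ..
  finally have X: "Cn (W1 1) (V1 1) - Cn (W2 1) (V2 1) = 2 * \<sigma> * (W1 1 - WQ)" .
  have "\<sigma> * Wt1 1 = - (1/2) * (2 * \<sigma> * (W1 1 - WQ))" unfolding RW[of 1] X ..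
  then have "\<sigma> * Wt1 1 = \<sigma> * (- (W1 1 - WQ))" by (simp add: right_diff_distrib)
  then have Wt11: "Wt1 1 = - (W1 1 - WQ)" using sig0 by simp
  have two: "Suc 1 = (2::nat)" by simp
  have W12: "W1 2 = WQ"
  proof -
    have "W1 2 = W1 1 + Wt1 1" using upd1'[of 1] unfolding two Weq[of 1, symmetric] half .
    then show ?thesis unfolding Wt11 by simp
  qed
  have W22: "W2 2 = WQ"
  proof -
    have "W2 2 = W2 1 + Wt1 1" using upd2'[of 1] unfolding two Weq[of 1, symmetric] half .
    then show ?thesis unfolding Wt11 W1eq by simp
  qed
  have G0: "ab + complex_of_real u * lp \<noteq> 0"
  proof
    assume "ab + complex_of_real u * lp = 0"
    then have "Re (ab + complex_of_real u * lp) = 0" by simp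
    moreover have "Re (ab + complex_of_real u * lp) = \<beta> + u * Re lp" unfolding ab_def abx_def by simp
    moreover have "\<beta> + u * Re lp > 0" using assms rp by (simp add: add_pos_pos)
    ultimately show False by simp
  qed
  have E11: "\<forall>x\<le>0. Q1 2 \<xi> x - q x = (Q1 2 \<xi> 0 - q 0) * exp (lp * of_real x)"
    and E11w: "W1 2 - WQ = (ab + complex_of_real u * lp) * (Q1 2 \<xi> 0 - q 0)"
    using e1[of 1] unfolding two by blast+
  have Q120: "Q1 2 \<xi> 0 - q 0 = 0" using E11w W12 G0 by simp
  have fin1: "\<forall>x<0. Q1 2 \<xi> x = Q \<xi> x"
  proof (intro allI impI)
    fix x :: real assume "x < 0"
    then have "x \<le> 0" by simp
    with E11 have "Q1 2 \<xi> x - q x = (Q1 2 \<xi> 0 - q 0) * exp (lp * of_real x)" by blast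
    then have "Q1 2 \<xi> x - q x = 0" unfolding Q120 by simp
    then show "Q1 2 \<xi> x = Q \<xi> x" unfolding q_def by simp
  qed
  have "(ab + complex_of_real u * lp) * (Q2 2 \<xi> 0 - q 0) = (ab + complex_of_real u * lp) * (Q1 1 \<xi> 0 - q 0) + (ab + complex_of_real u * lp) * Qt1 1 \<xi> 0"
    using upd2''[of 1] unfolding two by (simp add: algebra_simps)
  also have "\<dots> = (W1 1 - WQ) + Wt1 1" using t1[of 1] E10w by simp
  also have "\<dots> = 0" unfolding Wt11 by simp
  finally have Q220: "Q2 2 \<xi> 0 - q 0 = 0" using G0 by simp
  have E21: "\<forall>x\<ge>0. (Dx ?S2 (Dx ?S2 (Q2 2 \<xi>)) x - q2 x) - (lm + l0) * (Dx ?S2 (Q2 2 \<xi>) x - q1 x) + lm * l0 * (Q2 2 \<xi> x - q x) = 0"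
    and E21w: "W2 2 - WQ = ab * (Q2 2 \<xi> 0 - q 0) + complex_of_real u * (Dx ?S2 (Q2 2 \<xi>) 0 - q1 0)"
    using e2[of 1] unfolding two by blast+
  have "complex_of_real u * (Dx ?S2 (Q2 2 \<xi>) 0 - q1 0) = 0" using E21w unfolding W22 Q220 by simp
  then have Q221: "Dx ?S2 (Q2 2 \<xi>) 0 - q1 0 = 0" using u0 by simp
  have sm22: "smooth3 ?S2 (Q2 2 \<xi>)" using upd2[rule_format, of 1 \<xi>] unfolding two by blast
  note j22 = jet_diff[OF smooth_jet[OF sm22] jet_sub[OF jQ]]
  have fin2: "\<forall>x>0. Q2 2 \<xi> x = Q \<xi> x"
  proof (intro allI impI)
    fix x :: real assume "x > 0"
    then have x0: "x \<ge> 0" by simp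
    have "Q2 2 \<xi> x - q x = 0"
      by (rule F2_zero[OF j22 E21 Q220 Q221 x0])
    then show "Q2 2 \<xi> x = Q \<xi> x" unfolding q_def by simp
  qed
  show "(\<forall>x<0. Q1 2 \<xi> x = Q \<xi> x) \<and> (\<forall>x>0. Q2 2 \<xi> x = Q \<xi> x)" using fin1 fin2 by blast
qed


end
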